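(* Let $T(n)$ be the complete binary tree on $n$ vertices (every level except possibly the last completely filled, and the nodes of the last level as far left as possible), and let $D(n)$ be the digraph obtained from $T(n)$ by replacing each undirected edge $\{u,v\}$ by the two directed edges $(u,v)$ and $(v,u)$. Then $D(n)$ has zig-zag number at most $2$ (witnessed by a depth-first preorder of the vertices from the root), while its directed path-width is $\Omega(\log n)$.
   Context: A linear ordering $\omega=(v_1,\dots,v_n)$ of the vertices of a digraph is a $z$-topological ordering if every directed simple path has, for each $i$, at most $z$ edges with one endpoint in $\{v_1,\dots,v_i\}$ and the other in $\{v_{i+1},\dots,v_n\}$; the zig-zag number is the least such $z$. A directed path decomposition of $G=(V,E)$ is a sequence $X_1,\dots,X_p\subseteq V$ covering $V$, with $X_i\cap X_k\subseteq X_j$ for $i<j<k$, and such that for every edge $(u,v)$ there are $i\le j$ with $u\in X_i$, $v\in X_j$; its width is $\max_j|X_j|$, and the directed path-width is the minimum width. *)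

theory Defs
  imports Complex_Main
begin

definition dir_simple_path :: "('a \<times> 'a) set \<Rightarrow> 'a list \<Rightarrow> bool" where
  "dir_simple_path E p \<longleftrightarrow> p \<noteq> [] \<and> distinct p \<and>
     (\<forall>k. Suc k < length p \<longrightarrow> (p ! k, p ! Suc k) \<in> E)"

definition linear_ordering :: "'a set \<Rightarrow> 'a list \<Rightarrow> bool" where
  "linear_ordering V \<omega> \<longleftrightarrow> distinct \<omega> \<and> set \<omega> = V"

definition crossing_edges :: "'a set \<Rightarrow> 'a list \<Rightarrow> nat" where
  "crossing_edges S p = card {k. Suc k < length p \<and> ((p ! k \<in> S) \<noteq> (p ! Suc k \<in> S))}"

definition z_topological :: "'a set \<Rightarrow> ('a \<times> 'a) set \<Rightarrow> 'a list \<Rightarrow> nat \<Rightarrow> bool" where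
  "z_topological V E \<omega> z \<longleftrightarrow> linear_ordering V \<omega> \<and>
     (\<forall>p. dir_simple_path E p \<longrightarrow>
        (\<forall>i \<le> length \<omega>. crossing_edges (set (take i \<omega>)) p \<le> z))"

definition zigzag_number :: "'a set \<Rightarrow> ('a \<times> 'a) set \<Rightarrow> nat" where
  "zigzag_number V E = (LEAST z. \<exists>\<omega>. z_topological V E \<omega> z)"

definition dir_path_decomp :: "'a set \<Rightarrow> ('a \<times> 'a) set \<Rightarrow> 'a set list \<Rightarrow> bool" where
  "dir_path_decomp V E X \<longleftrightarrow> X \<noteq> [] \<and> (\<forall>j < length X. X ! j \<subseteq> V) \<and>
     (\<Union> (set X)) = V \<and>
     (\<forall>i j k. i < j \<and> j < k \<and> k < length X \<longrightarrow> X ! i \<inter> X ! k \<subseteq> X ! j) \<and>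
     (\<forall>(u, v) \<in> E. \<exists>i j. i \<le> j \<and> j < length X \<and> u \<in> X ! i \<and> v \<in> X ! j)"

definition dpd_width :: "'a set list \<Rightarrow> nat" where
  "dpd_width X = Max (card ` set X)"

definition directed_pathwidth :: "'a set \<Rightarrow> ('a \<times> 'a) set \<Rightarrow> nat" where
  "directed_pathwidth V E = (LEAST w. \<exists>X. dir_path_decomp V E X \<and> dpd_width X = w)"

(* Complete binary tree T(n) in heap numbering: vertices 1..n, root 1,
   children of v are 2v and 2v+1; undirected edges {v div 2, v} for 2 \<le> v \<le> n.
   This fills each level completely and the last one from the left. *)
definition cbt_vertices :: "nat \<Rightarrow> nat set" where
  "cbt_vertices n = {1..n}"

definition cbt_edges :: "nat \<Rightarrow> nat set set" where
  "cbt_edges n = {{v div 2, v} | v. 2 \<le> v \<and> v \<le> n}"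

definition D_edges :: "nat \<Rightarrow> (nat \<times> nat) set" where
  "D_edges n = {(u, v). {u, v} \<in> cbt_edges n}"

function preorder :: "nat \<Rightarrow> nat \<Rightarrow> nat list" where
  "preorder n v = (if v = 0 \<or> v > n then [] else
                     v # preorder n (2 * v) @ preorder n (2 * v + 1))"
  by pat_completeness auto
termination by (relation "measure (\<lambda>(n, v). Suc n - v)") auto

end

theory Submission
  imports Defs
begin


lemma div_pow_le: "a \<le> b \<Longrightarrow> (x::nat) div 2^b = (x div 2^a) div 2^(b-a)"
  by (metis div_mult2_eq le_add_diff_inverse power_add)

lemma div_pow_Suc: "(x::nat) div 2^Suc k = x div 2^k div 2"
  by (simp only: power_Suc2 div_mult2_eq)

lemma level_disj:
  assumes "(x::nat) div 2^a = p" "x div 2^b = q" "p \<noteq> q" "k \<le> p" "p < 2*k" "k \<le> q" "q < 2*k"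
  shows False
proof -
  have gen: "False" if h: "x div 2^a = p" "x div 2^b = q" "a < b" "k \<le> q" "p < 2*k" for a b p q
  proof -
    have "q = p div 2^(b-a)" using h div_pow_le[of a b x] by simp
    have "(2::nat)^1 \<le> 2^(b-a)" by (rule power_increasing) (use h(3) in auto)
    then have "p div 2^(b-a) \<le> p div 2^1" by (intro div_le_mono2) auto
    also have "\<dots> < k" using h(5) by simp
    finally have "q < k" using \<open>q = p div 2^(b-a)\<close> by simp
    then show False using h(4) by simp
  qed
  show False
  proof (cases a b rule: linorder_cases)
    case less then show ?thesis using gen assms by blast
  next case equal then show ?thesis using assms by simp
  next case greater then show ?thesis using gen[of b q a p] assms by blast
  qed
qed

declare preorder.simps[simp del]

lemma pre_cons: "1 \<le> v \<Longrightarrow> v \<le> n \<Longrightarrow> preorder n v = v # preorder n (2*v) @ preorder n (2*v+1)"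
  by (subst preorder.simps) simp

lemma pre_split: "x \<in> set (preorder n v) \<Longrightarrow> 1 \<le> v \<and> v \<le> n \<and>
   (x = v \<or> x \<in> set (preorder n (2*v)) \<or> x \<in> set (preorder n (2*v+1)))"
  by (subst (asm) preorder.simps) (auto split: if_splits)

lemma pre_bounds: "x \<in> set (preorder n v) \<Longrightarrow> 1 \<le> v \<and> v \<le> x \<and> x \<le> n"
proof (induction n v rule: preorder.induct)
  case (1 n v)
  from pre_split[OF 1(3)] have h: "1 \<le> v" "v \<le> n"
    "x = v \<or> x \<in> set (preorder n (2*v)) \<or> x \<in> set (preorder n (2*v+1))" by auto
  then show ?case using 1(1,2) by force
qed

lemma pre_anc: "x \<in> set (preorder n v) \<Longrightarrow> \<exists>k. x div 2^k = v"
proof (induction n v rule: preorder.induct)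
  case (1 n v)
  from pre_split[OF 1(3)] have h: "1 \<le> v" "v \<le> n"
    "x = v \<or> x \<in> set (preorder n (2*v)) \<or> x \<in> set (preorder n (2*v+1))" by auto
  then show ?case
  proof (elim disjE)
    assume "x = v" then show ?thesis by (intro exI[of _ 0]) simp
  next
    assume "x \<in> set (preorder n (2*v))"
    then obtain k where "x div 2^k = 2*v" using 1(1) h by auto
    then show ?thesis using div_pow_Suc[of x k] by (intro exI[of _ "Suc k"]) simp
  next
    assume "x \<in> set (preorder n (2*v+1))"
    then obtain k where "x div 2^k = 2*v+1" using 1(2) h by auto
    then show ?thesis using div_pow_Suc[of x k] by (intro exI[of _ "Suc k"]) simp
  qed
qed

lemma pre_distinct: "distinct (preorder n v)"
proof (induction n v rule: preorder.induct)
  case (1 n v)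
  show ?case
  proof (cases "v = 0 \<or> v > n")
    case True then show ?thesis by (subst preorder.simps) simp
  next
    case False
    then have v: "1 \<le> v" "v \<le> n" by auto
    have dA: "distinct (preorder n (2*v))" and dB: "distinct (preorder n (2*v+1))" using 1 False by auto
    have nA: "v \<notin> set (preorder n (2*v))" using pre_bounds[of v n "2*v"] v by auto
    have nB: "v \<notin> set (preorder n (2*v+1))" using pre_bounds[of v n "2*v+1"] v by auto
    have dis: "set (preorder n (2*v)) \<inter> set (preorder n (2*v+1)) = {}"
    proof (rule ccontr)
      assume "\<not> ?thesis"
      then obtain x where "x \<in> set (preorder n (2*v))" "x \<in> set (preorder n (2*v+1))" by auto
      then obtain a b where "x div 2^a = 2*v" "x div 2^b = 2*v+1" using pre_anc by blast
      then show False using level_disj[of x a "2*v" b "2*v+1" "2*v"] v by simp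
    qed
    show ?thesis using dA dB nA nB dis v by (simp add: pre_cons)
  qed
qed

lemma pre_infix: "x \<in> set (preorder n v) \<Longrightarrow> \<exists>xs ys. preorder n v = xs @ preorder n x @ ys"
proof (induction n v rule: preorder.induct)
  case (1 n v)
  from pre_split[OF 1(3)] have h: "1 \<le> v" "v \<le> n"
    "x = v \<or> x \<in> set (preorder n (2*v)) \<or> x \<in> set (preorder n (2*v+1))" by auto
  have e: "preorder n v = v # preorder n (2*v) @ preorder n (2*v+1)" using h pre_cons by simp
  from h(3) show ?case
  proof (elim disjE)
    assume "x = v" then show ?thesis by (intro exI[of _ "[]"]) simp
  next
    assume "x \<in> set (preorder n (2*v))"
    then obtain xs ys where "preorder n (2*v) = xs @ preorder n x @ ys" using 1(1) h by auto
    then show ?thesis unfolding e by (intro exI[of _ "v # xs"] exI[of _ "ys @ preorder n (2*v+1)"]) simp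
  next
    assume "x \<in> set (preorder n (2*v+1))"
    then obtain xs ys where "preorder n (2*v+1) = xs @ preorder n x @ ys" using 1(2) h by auto
    then show ?thesis unfolding e by (intro exI[of _ "v # preorder n (2*v) @ xs"] exI[of _ "ys"]) simp
  qed
qed

lemma pre_complete: "1 \<le> x \<Longrightarrow> x \<le> n \<Longrightarrow> x \<in> set (preorder n 1)"
proof (induction x rule: less_induct)
  case (less x)
  show ?case
  proof (cases "x = 1")
    case True then show ?thesis using less pre_cons[of 1 n] by simp
  next
    case False
    let ?p = "x div 2"
    have "?p \<in> set (preorder n 1)" using less False by auto
    then obtain xs ys where e: "preorder n 1 = xs @ preorder n ?p @ ys" using pre_infix by blast
    have "x = 2 * ?p \<or> x = 2 * ?p + 1" by auto
    moreover have "x \<in> set (preorder n x)" using less pre_cons[of x n] by simp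
    ultimately have "x \<in> set (preorder n ?p)" using pre_cons[of ?p n] less False by auto
    then show ?thesis unfolding e by simp
  qed
qed

lemma pre_set: "set (preorder n 1) = {1..n}"
  using pre_bounds pre_complete by fastforce

lemma pre_prefix_anc:
  assumes "v \<in> set (take i (preorder n 1))" "2 \<le> v"
  shows "v div 2 \<in> set (take i (preorder n 1))"
proof -
  let ?w = "preorder n 1"
  let ?p = "v div 2"
  have v: "v \<in> set ?w" using assms(1) by (meson in_set_takeD)
  then have "v \<le> n" using pre_bounds by blast
  then have "?p \<in> set ?w" using assms(2) by (intro pre_complete) auto
  then obtain xs ys where e: "?w = xs @ preorder n ?p @ ys" using pre_infix by blast
  have "?p \<le> n" using \<open>v \<le> n\<close> by simp
  have vv: "v \<in> set (preorder n v)" using pre_cons[of v n] \<open>v \<le> n\<close> assms(2) by simp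
  have "v = 2 * ?p \<or> v = 2 * ?p + 1" by auto
  then have "v \<in> set (preorder n (2*?p) @ preorder n (2*?p+1))" using vv by auto
  then obtain L where L: "preorder n ?p = ?p # L" "v \<in> set L"
    using pre_cons[of ?p n] assms(2) \<open>?p \<le> n\<close> by auto
  have e2: "?w = (xs @ [?p]) @ (L @ ys)" using e L by simp
  have d: "distinct ?w" by (rule pre_distinct)
  show ?thesis
  proof (cases "i \<le> length (xs @ [?p])")
    case True
    then have "take i ?w = take i (xs @ [?p])" unfolding e2 by (simp only: take_append) simp
    then have "v \<in> set (xs @ [?p])" using assms(1) by (metis in_set_takeD)
    moreover have "v \<in> set (L @ ys)" using L by simp
    ultimately show ?thesis using d unfolding e2 by auto
  next
    case False
    then have "take i ?w = (xs @ [?p]) @ take (i - length (xs @ [?p])) (L @ ys)"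
      unfolding e2 using False by (simp only: take_append) simp
    then show ?thesis by simp
  qed
qed



lemma D_step: "(a,b) \<in> D_edges n \<Longrightarrow> (a = b div 2 \<and> 2 \<le> b \<and> b \<le> n) \<or> (b = a div 2 \<and> 2 \<le> a \<and> a \<le> n)"
  unfolding D_edges_def cbt_edges_def by (auto simp: doubleton_eq_iff)

lemma card_le1:
  assumes "finite (A::nat set)" "\<And>a b. a\<in>A \<Longrightarrow> b\<in>A \<Longrightarrow> a < b \<Longrightarrow> False"
  shows "card A \<le> 1"
proof -
  have "\<forall>a\<in>A. \<forall>b\<in>A. a = b" using assms(2) by (metis linorder_neqE_nat)
  then show ?thesis using assms(1) card_le_Suc0_iff_eq by fastforce
qed

lemma cross_le2:
  assumes anc: "\<forall>v\<in>S. 2 \<le> v \<longrightarrow> v div 2 \<in> S"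
  and path: "dir_simple_path (D_edges n) p"
  shows "crossing_edges S p \<le> 2"
proof -
  define dn where "dn k \<longleftrightarrow> p!k = p!Suc k div 2 \<and> 2 \<le> p!Suc k" for k
  define up where "up k \<longleftrightarrow> p!Suc k = p!k div 2 \<and> 2 \<le> p!k" for k
  have dist: "distinct p" using path unfolding dir_simple_path_def by simp
  have step: "dn k \<or> up k" if "Suc k < length p" for k
    using path that D_step[of "p!k" "p!Suc k" n] unfolding dir_simple_path_def dn_def up_def by blast
  have notboth: "\<not> (dn k \<and> up k)" for k unfolding dn_def up_def by auto
  have prop1: "dn (Suc k)" if "dn k" "Suc (Suc k) < length p" for k
  proof (rule ccontr)
    assume "\<not> dn (Suc k)"
    then have "up (Suc k)" using step that by blast
    then have "p ! Suc (Suc k) = p ! k" using that(1) unfolding up_def dn_def by simp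
    then show False using dist that(2) by (simp add: nth_eq_iff_index_eq)
  qed
  have propB: "dn j" if "dn k" "k \<le> j" "Suc j < length p" for k j
    using that
  proof (induction j)
    case 0 then show ?case by simp
  next
    case (Suc j)
    show ?case
    proof (cases "k \<le> j")
      case True then show ?thesis using Suc prop1 by auto
    next
      case False then have "k = Suc j" using Suc by simp
      then show ?thesis using Suc by simp
    qed
  qed
  have notS: "p ! Suc j \<notin> S" if "dn k" "p ! Suc k \<notin> S" "k \<le> j" "Suc j < length p" for k j
    using that
  proof (induction j)
    case 0 then show ?case by simp
  next
    case (Suc j)
    show ?case
    proof (cases "k \<le> j")
      case True
      then have a: "p ! Suc j \<notin> S" using Suc by auto
      have "dn (Suc j)" using propB Suc by blast
      then show ?thesis using a anc unfolding dn_def by metis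
    next
      case False then have "k = Suc j" using Suc by simp
      then show ?thesis using Suc by simp
    qed
  qed
  have upall: "up j" if "up k'" "j \<le> k'" "Suc k' < length p" for j k'
  proof (rule ccontr)
    assume "\<not> up j"
    moreover have "Suc j < length p" using that by simp
    ultimately have "dn j" using step by blast
    then have "dn k'" using propB that by blast
    then show False using notboth that by blast
  qed
  have inS: "p ! j \<in> S" if "up k'" "p ! Suc k \<in> S" "k < j" "j \<le> k'" "Suc k' < length p" for k k' j
    using that
  proof (induction j)
    case 0 then show ?case by simp
  next
    case (Suc j)
    show ?case
    proof (cases "k < j")
      case True
      then have a: "p ! j \<in> S" using Suc by auto
      have "up j" using upall Suc by auto
      then show ?thesis using a anc unfolding up_def by metis
    next
      case False then have "k = j" using Suc by simp
      then show ?thesis using Suc by simp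
    qed
  qed
  define K where "K = {k. Suc k < length p \<and> ((p ! k \<in> S) \<noteq> (p ! Suc k \<in> S))}"
  have fK: "finite K" unfolding K_def by (rule finite_subset[of _ "{..<length p}"]) auto
  have K1: "card {k\<in>K. dn k} \<le> 1"
  proof (rule card_le1)
    show "finite {k\<in>K. dn k}" using fK by simp
  next
    fix a b assume a: "a \<in> {k\<in>K. dn k}" and b: "b \<in> {k\<in>K. dn k}" and ab: "a < b"
    have da: "dn a" and db: "dn b" using a b by auto
    have ca: "p ! a \<in> S \<and> p ! Suc a \<notin> S" using a anc unfolding K_def dn_def by auto
    have cb: "p ! b \<in> S \<and> p ! Suc b \<notin> S" using b anc unfolding K_def dn_def by auto
    have "Suc b < length p" using b unfolding K_def by simp
    then have "p ! Suc (b - 1) \<notin> S" using notS[of a "b - 1"] da ca ab by auto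
    then show False using cb ab by (metis Suc_diff_1 not_gr_zero not_less0)
  qed
  have K2: "card {k\<in>K. up k} \<le> 1"
  proof (rule card_le1)
    show "finite {k\<in>K. up k}" using fK by simp
  next
    fix a b assume a: "a \<in> {k\<in>K. up k}" and b: "b \<in> {k\<in>K. up k}" and ab: "a < b"
    have ua: "up a" and ub: "up b" using a b by auto
    have ca: "p ! a \<notin> S \<and> p ! Suc a \<in> S" using a anc unfolding K_def up_def by auto
    have cb: "p ! b \<notin> S \<and> p ! Suc b \<in> S" using b anc unfolding K_def up_def by auto
    have "Suc b < length p" using b unfolding K_def by simp
    then have "p ! b \<in> S" using inS[of b a b] ub ca ab by auto
    then show False using cb by simp
  qed
  have "K \<subseteq> {k\<in>K. dn k} \<union> {k\<in>K. up k}" using step unfolding K_def by auto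
  then have "card K \<le> card ({k\<in>K. dn k} \<union> {k\<in>K. up k})" by (intro card_mono) (use fK in auto)
  also have "\<dots> \<le> 2" using card_Un_le[of "{k\<in>K. dn k}" "{k\<in>K. up k}"] K1 K2 by linarith
  finally show ?thesis unfolding crossing_edges_def K_def .
qed

lemma part1: "z_topological (cbt_vertices n) (D_edges n) (preorder n 1) 2"
  unfolding z_topological_def linear_ordering_def cbt_vertices_def
  using pre_distinct pre_set cross_le2 pre_prefix_anc by blast

lemma part1b: "zigzag_number (cbt_vertices n) (D_edges n) \<le> 2"
  unfolding zigzag_number_def using part1 by (intro Least_le) blast



definition sub :: "nat \<Rightarrow> nat \<Rightarrow> nat set" where
  "sub h u = {x. \<exists>i\<le>h. x div 2^i = u}"

definition shares :: "nat set list \<Rightarrow> nat \<Rightarrow> nat \<Rightarrow> bool" where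
  "shares X a b \<longleftrightarrow> (\<exists>j<length X. a \<in> X!j \<and> b \<in> X!j)"

definition interval :: "nat set list \<Rightarrow> bool" where
  "interval X \<longleftrightarrow> (\<forall>i j k. i < j \<and> j < k \<and> k < length X \<longrightarrow> X ! i \<inter> X ! k \<subseteq> X ! j)"

inductive reach :: "nat set list \<Rightarrow> nat set \<Rightarrow> nat \<Rightarrow> nat \<Rightarrow> bool" for X C where
  rrefl: "x \<in> C \<Longrightarrow> reach X C x x"
| rstep: "reach X C x y \<Longrightarrow> z \<in> C \<Longrightarrow> shares X y z \<Longrightarrow> reach X C x z"

lemma shares_sym: "shares X a b \<Longrightarrow> shares X b a"
  unfolding shares_def by blast

lemma reach_in: "reach X C x y \<Longrightarrow> x \<in> C \<and> y \<in> C"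
  by (induction rule: reach.induct) auto

lemma reach_front: "reach X C y z \<Longrightarrow> x \<in> C \<Longrightarrow> shares X x y \<Longrightarrow> reach X C x z"
proof (induction rule: reach.induct)
  case (rrefl y) then show ?case using reach.rrefl reach.rstep by blast
next
  case (rstep y z w) then show ?case using reach.rstep by blast
qed

lemma reach_sym: "reach X C x y \<Longrightarrow> reach X C y x"
proof (induction rule: reach.induct)
  case (rrefl x) then show ?case by (rule reach.rrefl)
next
  case (rstep x y z) then show ?case using reach_front shares_sym by blast
qed

lemma reach_trans: "reach X C y z \<Longrightarrow> reach X C x y \<Longrightarrow> reach X C x z"
proof (induction rule: reach.induct)
  case (rrefl y) then show ?case by blast
next
  case (rstep y z w) then show ?case using reach.rstep by blast
qed

lemma intv: "interval X \<Longrightarrow> x \<in> X!a \<Longrightarrow> x \<in> X!b \<Longrightarrow> a \<le> c \<Longrightarrow> c \<le> b \<Longrightarrow> b < length X \<Longrightarrow> x \<in> X!c"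
proof -
  assume a: "interval X" "x \<in> X!a" "x \<in> X!b" "a \<le> c" "c \<le> b" "b < length X"
  show "x \<in> X!c"
  proof (cases "a = c \<or> c = b")
    case True then show ?thesis using a by auto
  next
    case False
    then have "a < c" "c < b" using a by auto
    then have "X!a \<inter> X!b \<subseteq> X!c" using a(1,6) unfolding interval_def by blast
    then show ?thesis using a(2,3) by blast
  qed
qed

lemma walk: "reach X C x y \<Longrightarrow> interval X \<Longrightarrow> x \<in> X!a \<Longrightarrow> y \<in> X!b \<Longrightarrow> a \<le> j \<Longrightarrow> j \<le> b
   \<Longrightarrow> b < length X \<Longrightarrow> \<exists>c\<in>C. c \<in> X!j"
proof (induction arbitrary: b rule: reach.induct)
  case (rrefl x) then show ?case using intv by blast
next
  case (rstep x y z)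
  from rstep(3) obtain t where t: "t < length X" "y \<in> X!t" "z \<in> X!t" unfolding shares_def by blast
  show ?case
  proof (cases "j \<le> t")
    case True then show ?thesis using rstep t by blast
  next
    case False then show ?thesis using rstep t intv[of X z t b j] by auto
  qed
qed

lemma sub_lt: "x \<in> sub h u \<Longrightarrow> x < (u+1)*2^h"
proof -
  assume "x \<in> sub h u"
  then obtain i where i: "i \<le> h" "x div 2^i = u" unfolding sub_def by blast
  have "x = x div 2^i * 2^i + x mod 2^i" by (rule div_mult_mod_eq[symmetric])
  moreover have "x mod 2^i < 2^i" by simp
  moreover have "(x div 2^i + 1) * 2^i = x div 2^i * 2^i + 2^i" by simp
  ultimately have "x < (x div 2^i + 1) * 2^i" by linarith
  also have "\<dots> \<le> (u+1)*2^h" using i(2) by (simp only:) (intro mult_le_mono2 power_increasing i(1), simp)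
  finally show ?thesis .
qed

lemma sub_fin: "finite (sub h u)"
  by (rule finite_subset[of _ "{..<(u+1)*2^h}"]) (auto dest: sub_lt)

lemma sub_ge: "x \<in> sub h u \<Longrightarrow> u \<le> x"
  unfolding sub_def by (auto intro: div_le_dividend order_trans)

lemma sub_range: "1 \<le> u \<Longrightarrow> (u+1)*2^h \<le> n+1 \<Longrightarrow> x \<in> sub h u \<Longrightarrow> 1 \<le> x \<and> x \<le> n"
  using sub_lt[of x h u] sub_ge[of x h u] by auto

lemma sub_root: "u \<in> sub h u"
  unfolding sub_def by (intro CollectI exI[of _ 0]) simp

lemma sub_child: "x \<in> sub h (4*u+l) \<Longrightarrow> l < 4 \<Longrightarrow> x \<in> sub (h+2) u"
proof -
  assume a: "x \<in> sub h (4*u+l)" "l < 4"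
  then obtain i where i: "i \<le> h" "x div 2^i = 4*u+l" unfolding sub_def by blast
  have "x div 2^(i+2) = (x div 2^i) div 2^2" using div_pow_le[of i "i+2" x] by simp
  also have "\<dots> = u" using i a(2) by simp
  finally show ?thesis unfolding sub_def using i by (intro CollectI exI[of _ "i+2"]) simp
qed

lemma sub_disj: "l < 4 \<Longrightarrow> k < 4 \<Longrightarrow> l \<noteq> k \<Longrightarrow> 1 \<le> u \<Longrightarrow> x \<in> sub h (4*u+l) \<Longrightarrow> x \<in> sub h (4*u+k) \<Longrightarrow> False"
  unfolding sub_def using level_disj[of x _ "4*u+l" _ "4*u+k" "4*u"] by auto

lemma sub_reach:
  assumes sh: "\<forall>w. 2 \<le> w \<and> w \<le> n \<longrightarrow> shares X (w div 2) w"
    and p: "1 \<le> p" "(p+1)*2^h \<le> n+1" and C: "sub h p \<subseteq> C"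
  shows "x \<in> sub h p \<Longrightarrow> reach X C p x"
proof -
  have "\<forall>x. x div 2^i = p \<longrightarrow> i \<le> h \<longrightarrow> reach X C p x" for i
  proof (induction i)
    case 0 then show ?case using C sub_root by (auto intro: reach.rrefl)
  next
    case (Suc i)
    show ?case
    proof (intro allI impI)
      fix x assume x: "x div 2^Suc i = p" "Suc i \<le> h"
      have "x div 2^Suc i = x div 2 div 2^i" by (simp only: power_Suc div_mult2_eq)
      then have r: "reach X C p (x div 2)" using Suc x by auto
      have xs: "x \<in> sub h p" unfolding sub_def using x by blast
      then have "x \<le> n" using sub_range p by blast
      moreover have "2 \<le> x"
      proof (rule ccontr)
        assume "\<not> 2 \<le> x"
        have "(2::nat) \<le> 2^Suc i" by simp
        then have "x < 2^Suc i" using \<open>\<not> 2 \<le> x\<close> by linarith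
        then have "x div 2^Suc i = 0" by (rule div_less)
        then show False using x p by simp
      qed
      ultimately have "shares X (x div 2) x" using sh by blast
      then show "reach X C p x" using r xs C by (blast intro: reach.rstep)
    qed
  qed
  then show "x \<in> sub h p \<Longrightarrow> reach X C p x" unfolding sub_def by blast
qed



lemma lower:
  assumes iv: "interval X" and sh: "\<forall>w. 2 \<le> w \<and> w \<le> n \<longrightarrow> shares X (w div 2) w"
    and cov: "\<forall>v. 1 \<le> v \<and> v \<le> n \<longrightarrow> (\<exists>j<length X. v \<in> X!j)"
  shows "1 \<le> u \<Longrightarrow> (u+1)*2^h \<le> n+1 \<Longrightarrow> \<exists>j<length X. h div 2 + 1 \<le> card (X!j \<inter> sub h u)"
proof (induction h arbitrary: u rule: less_induct)
  case (less h)
  show ?case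
  proof (cases "h < 2")
    case True
    have "u \<le> n" using sub_range[OF less.prems sub_root] by simp
    then obtain j where j: "j < length X" "u \<in> X!j" using cov less.prems by blast
    have "X!j \<inter> sub h u \<noteq> {}" using j sub_root by blast
    then have "1 \<le> card (X!j \<inter> sub h u)" using sub_fin
      by (metis One_nat_def Suc_leI card_gt_0_iff finite_Int)
    then show ?thesis using j True by auto
  next
    case False
    then obtain g where hg: "h = g + 2" by (metis add.commute le_Suc_ex not_less)
    let ?T = "sub h u"
    let ?B = "\<lambda>l. sub g (4*u+l)"
    have pl: "(4*u+l+1)*2^g \<le> n+1" if "l < 4" for l
    proof -
      have "(4*u+l+1)*2^g \<le> (4*u+4)*2^g" using that by (intro mult_le_mono1) simp
      also have "\<dots> = (u+1)*2^h" unfolding hg by (simp add: power_add algebra_simps)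
      finally show ?thesis using less.prems(2) by simp
    qed
    have "\<forall>l. \<exists>j. l < 3 \<longrightarrow> j < length X \<and> g div 2 + 1 \<le> card (X!j \<inter> ?B l)"
      using less.IH[of g] hg pl less.prems(1) by simp
    then obtain J where J: "\<And>l. l < 3 \<Longrightarrow> J l < length X \<and> g div 2 + 1 \<le> card (X!(J l) \<inter> ?B l)"
      by metis
    have "\<forall>l. \<exists>x. l < 3 \<longrightarrow> x \<in> X!(J l) \<inter> ?B l"
    proof (intro allI)
      fix l show "\<exists>x. l < 3 \<longrightarrow> x \<in> X!(J l) \<inter> ?B l"
      proof (cases "l < 3")
        case True
        then have "X!(J l) \<inter> ?B l \<noteq> {}" using J[OF True] by (metis card.empty not_one_le_zero Suc_le_eq
            add.commute add_gr_0 less_one not_less zero_less_Suc le_add2 le_zero_eq)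
        then show ?thesis by blast
      qed simp
    qed
    then obtain xs where xs: "\<And>l. l < 3 \<Longrightarrow> xs l \<in> X!(J l) \<inter> ?B l" by metis
    have Tfin: "finite ?T" by (rule sub_fin)
    have BT: "?B l \<subseteq> ?T" if "l < 4" for l using sub_child that hg by blast
    have conn: "reach X (?T - ?B k) (xs l) u" if "l < 3" "k < 3" "l \<noteq> k" for l k
    proof -
      let ?C = "?T - ?B k"
      let ?p = "4*u+l"
      let ?q = "2*u + l div 2"
      have BC: "?B l \<subseteq> ?C" using BT[of l] sub_disj[of l k u _ g] that less.prems by auto
      have r1: "reach X ?C ?p (xs l)"
        by (rule sub_reach[OF sh _ pl BC]) (use xs that less.prems in auto)
      have "?p \<le> n" using sub_range[OF _ pl sub_root, of l] that less.prems by simp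
      moreover have "2 \<le> ?p" using less.prems by simp
      moreover have "?p div 2 = ?q" by simp
      ultimately have s1: "shares X ?q ?p" using sh by metis
      have "?q \<le> n" using \<open>?p \<le> n\<close> by simp
      moreover have "2 \<le> ?q" using less.prems by simp
      moreover have "?q div 2 = u"
      proof -
        have "l = 0 \<or> l = 1 \<or> l = 2" using that by auto
        then show ?thesis by auto
      qed
      ultimately have s2: "shares X u ?q" using sh by metis
      have qT: "?q \<in> ?T" unfolding sub_def hg using that
        by (intro CollectI exI[of _ 1]) auto
      have ld: "l div 2 \<le> 1" using that by auto
      have qB: "?q \<notin> ?B k" using sub_ge[of ?q g "4*u+k"] less.prems ld by auto
      have uT: "u \<in> ?T" by (rule sub_root)
      have uB: "u \<notin> ?B k" using sub_ge[of u g "4*u+k"] less.prems by auto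
      have "reach X ?C (xs l) ?p" using reach_sym[OF r1] .
      then have "reach X ?C (xs l) ?q" using qT qB s1 shares_sym by (blast intro: reach.rstep)
      then show "reach X ?C (xs l) u" using uT uB s2 shares_sym by (blast intro: reach.rstep)
    qed
    have mid: "\<exists>j<length X. h div 2 + 1 \<le> card (X!j \<inter> ?T)"
      if k: "k < 3" "l < 3" "m < 3" "k \<noteq> l" "k \<noteq> m" "J l \<le> J k" "J k \<le> J m" for k l m
    proof -
      have "reach X (?T - ?B k) (xs l) (xs m)"
        using conn[of l k] conn[of m k] k reach_sym reach_trans by blast
      then obtain c where c: "c \<in> ?T - ?B k" "c \<in> X!(J k)"
        using walk[OF _ iv, of _ "xs l" "xs m" "J l" "J m" "J k"] xs k J by blast
      have "insert c (X!(J k) \<inter> ?B k) \<subseteq> X!(J k) \<inter> ?T" using c BT[of k] k by auto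
      then have "card (insert c (X!(J k) \<inter> ?B k)) \<le> card (X!(J k) \<inter> ?T)"
        using Tfin by (intro card_mono) auto
      moreover have "card (insert c (X!(J k) \<inter> ?B k)) = card (X!(J k) \<inter> ?B k) + 1"
        using c sub_fin by simp
      ultimately show ?thesis using J[OF k(1)] hg by (intro exI[of _ "J k"]) auto
    qed
    show ?thesis
    proof (cases "J 0 \<le> J 1")
      case T1: True
      show ?thesis
      proof (cases "J 1 \<le> J 2")
        case True then show ?thesis using mid[of 1 0 2] T1 by simp
      next
        case F2: False
        show ?thesis
        proof (cases "J 0 \<le> J 2")
          case True then show ?thesis using mid[of 2 0 1] T1 F2 by simp
        next
          case False then show ?thesis using mid[of 0 2 1] T1 F2 by simp
        qed
      qed
    next
      case F1: False
      show ?thesis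
      proof (cases "J 0 \<le> J 2")
        case True then show ?thesis using mid[of 0 1 2] F1 by simp
      next
        case F2: False
        show ?thesis
        proof (cases "J 1 \<le> J 2")
          case True then show ?thesis using mid[of 2 1 0] F1 F2 by simp
        next
          case False then show ?thesis using mid[of 1 2 0] F1 F2 by simp
        qed
      qed
    qed
  qed
qed



lemma D_edge_in: "2 \<le> w \<Longrightarrow> w \<le> n \<Longrightarrow> (w div 2, w) \<in> D_edges n \<and> (w, w div 2) \<in> D_edges n"
  unfolding D_edges_def cbt_edges_def by (auto simp: insert_commute)

lemma decomp_props:
  assumes d: "dir_path_decomp {1..n} (D_edges n) X"
  shows "interval X" "\<forall>w. 2 \<le> w \<and> w \<le> n \<longrightarrow> shares X (w div 2) w"
    "\<forall>v. 1 \<le> v \<and> v \<le> n \<longrightarrow> (\<exists>j<length X. v \<in> X!j)" "\<forall>j<length X. X!j \<subseteq> {1..n}"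
proof -
  show iv: "interval X" using d unfolding dir_path_decomp_def interval_def by (elim conjE) assumption
  show "\<forall>j<length X. X!j \<subseteq> {1..n}" using d unfolding dir_path_decomp_def by (elim conjE) assumption
  show "\<forall>v. 1 \<le> v \<and> v \<le> n \<longrightarrow> (\<exists>j<length X. v \<in> X!j)"
  proof (intro allI impI)
    fix v assume "1 \<le> v \<and> v \<le> n"
    then have "v \<in> \<Union> (set X)" using d unfolding dir_path_decomp_def by auto
    then show "\<exists>j<length X. v \<in> X!j" by (metis UnionE in_set_conv_nth)
  qed
  show "\<forall>w. 2 \<le> w \<and> w \<le> n \<longrightarrow> shares X (w div 2) w"
  proof (intro allI impI)
    fix w assume w: "2 \<le> w \<and> w \<le> n"
    let ?u = "w div 2"
    have E: "\<forall>(a, b) \<in> D_edges n. \<exists>i j. i \<le> j \<and> j < length X \<and> a \<in> X ! i \<and> b \<in> X ! j"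
      using d unfolding dir_path_decomp_def by (elim conjE) assumption
    have e1: "(?u, w) \<in> D_edges n" and e2: "(w, ?u) \<in> D_edges n" using D_edge_in[of w n] w by auto
    have "\<exists>i j. i \<le> j \<and> j < length X \<and> ?u \<in> X ! i \<and> w \<in> X ! j" using bspec[OF E e1] by simp
    then obtain i j where ij: "i \<le> j" "j < length X" "?u \<in> X!i" "w \<in> X!j" by blast
    have "\<exists>i j. i \<le> j \<and> j < length X \<and> w \<in> X ! i \<and> ?u \<in> X ! j" using bspec[OF E e2] by simp
    then obtain i' j' where ij': "i' \<le> j'" "j' < length X" "w \<in> X!i'" "?u \<in> X!j'" by blast
    show "shares X ?u w"
    proof (cases "j \<le> j'")
      case True
      then have "?u \<in> X!j" using intv[OF iv ij(3) ij'(4)] ij ij' by auto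
      then show ?thesis unfolding shares_def using ij by blast
    next
      case False
      then have "w \<in> X!j'" using intv[OF iv ij'(3) ij(4)] ij ij' by auto
      then show ?thesis unfolding shares_def using ij' by blast
    qed
  qed
qed

lemma exm: "1 \<le> (n::nat) \<Longrightarrow> \<exists>m. 2^m \<le> n \<and> n < 2^(m+1)"
proof (induction n rule: less_induct)
  case (less n)
  show ?case
  proof (cases "n = 1")
    case True then show ?thesis by (intro exI[of _ 0]) simp
  next
    case False
    then have "n div 2 < n" "1 \<le> n div 2" using less.prems by auto
    then obtain m where m: "2^m \<le> n div 2" "n div 2 < 2^(m+1)" using less.IH by blast
    have a: "2^Suc m \<le> n" using m(1) by simp
    have "n \<le> 2 * (n div 2) + 1" by simp
    then have b: "n < 2^(Suc m + 1)" using m(2) by simp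
    show ?thesis using a b by blast
  qed
qed

lemma pw_bound:
  assumes "2^m \<le> n" "1 \<le> m"
  shows "(m-1) div 2 + 1 \<le> directed_pathwidth {1..n} (D_edges n)"
proof -
  have ed: "\<forall>(a,b)\<in>D_edges n. \<exists>i j. i \<le> j \<and> j < length [{1..n}] \<and> a \<in> [{1..n}]!i \<and> b \<in> [{1..n}]!j"
  proof (intro ballI, clarify)
    fix a b assume "(a,b) \<in> D_edges n"
    then have "1 \<le> a \<and> a \<le> n \<and> 1 \<le> b \<and> b \<le> n" using D_step[of a b n] by auto
    then show "\<exists>i j. i \<le> j \<and> j < length [{1..n}] \<and> a \<in> [{1..n}]!i \<and> b \<in> [{1..n}]!j"
      by (intro exI[of _ 0]) simp
  qed
  have ex: "dir_path_decomp {1..n} (D_edges n) [{1..n}]"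
    unfolding dir_path_decomp_def using ed by simp
  obtain X where X: "dir_path_decomp {1..n} (D_edges n) X"
    "dpd_width X = directed_pathwidth {1..n} (D_edges n)"
  proof -
    have "\<exists>X. dir_path_decomp {1..n} (D_edges n) X \<and> dpd_width X = (LEAST w. \<exists>X. dir_path_decomp {1..n} (D_edges n) X \<and> dpd_width X = w)"
      by (rule LeastI_ex) (use ex in blast)
    then show ?thesis using that unfolding directed_pathwidth_def by blast
  qed
  note P = decomp_props[OF X(1)]
  have "(1+1)*2^(m-1) = (2::nat)^m" using assms(2) power_minus_mult[of m "2::nat"]
    by (simp add: mult.commute)
  then have "(1+1)*2^(m-1) \<le> n + 1" using assms(1) by simp
  then obtain j where j: "j < length X" "(m-1) div 2 + 1 \<le> card (X!j \<inter> sub (m-1) 1)"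
    using lower[OF P(1) P(2) P(3), of 1 "m-1"] by auto
  have "card (X!j \<inter> sub (m-1) 1) \<le> card (X!j)"
    using P(4) j(1) by (intro card_mono) (auto intro: finite_subset)
  also have "\<dots> \<le> dpd_width X" unfolding dpd_width_def using j(1) by (intro Max_ge) auto
  finally show ?thesis using j X(2) by simp
qed

lemma part2: "\<exists>c::real > 0. \<exists>N. \<forall>n \<ge> N.
              c * ln (real n) \<le> real (directed_pathwidth (cbt_vertices n) (D_edges n))"
proof (intro exI[of _ "1/4"] conjI exI[of _ 2] allI impI)
  fix n :: nat assume n: "2 \<le> n"
  obtain m where m: "2^m \<le> n" "n < 2^(m+1)" using exm[of n] n by auto
  have m1: "1 \<le> m"
  proof (rule ccontr)
    assume "\<not> 1 \<le> m" then have "m = 0" by simp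
    then show False using m n by simp
  qed
  have pw: "(m-1) div 2 + 1 \<le> directed_pathwidth (cbt_vertices n) (D_edges n)"
    using pw_bound[OF m(1) m1] unfolding cbt_vertices_def .
  have "m \<le> 2 * ((m-1) div 2 + 1)" by simp
  then have RM: "real m \<le> 2 * real (directed_pathwidth (cbt_vertices n) (D_edges n))" using pw by linarith
  have L1: "ln (real n) \<le> ln ((2::real) ^ (m+1))"
  proof -
    have "real n < real (2^(m+1))" using m(2) by (simp only: of_nat_less_iff)
    then have nr: "real n < (2::real)^(m+1)" by simp
    have p: "0 < real n" using n by simp
    have "(0::real) < 2^(m+1)" by simp
    then show ?thesis using ln_le_cancel_iff[OF p] nr by simp
  qed
  have L2: "ln ((2::real) ^ (m+1)) = real (m+1) * ln 2" by (rule ln_realpow)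
  have L3: "real (m+1) * ln 2 \<le> real (m+1)" by (rule mult_left_le) (use ln_2_less_1 in auto)
  have L4: "real (m+1) \<le> 2 * real m" using m1 by simp
  from L1 L2 L3 L4 have "ln (real n) \<le> 2 * real m" by linarith
  with RM show "1/4 * ln (real n) \<le> real (directed_pathwidth (cbt_vertices n) (D_edges n))"
    by linarith
qed simp


theorem mainTheorem4:
  shows "(\<forall>n. z_topological (cbt_vertices n) (D_edges n) (preorder n 1) 2
              \<and> zigzag_number (cbt_vertices n) (D_edges n) \<le> 2)
       \<and> (\<exists>c::real > 0. \<exists>N. \<forall>n \<ge> N.
              c * ln (real n) \<le> real (directed_pathwidth (cbt_vertices n) (D_edges n)))"
  using part1 part1b part2 by blast

end
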